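(* Let $(G,\sigma)$ be a connection graph and let $f:V\to\mathbb{R}^{d\times d}$ satisfy $(\mathcal{L}f)(x)=0_{d\times d}$ for all $x\in V$. Then for any $i,j\in V$, $f(i)=\Omega^0_{ij}f(j)$.
   Context: A connection graph $(G,\sigma)$: finite connected weighted graph $G=(V,E,W)$ with $w_{ij}>0$ iff $\{i,j\}\in E$, $\deg(i)=\sum_j w_{ij}$, and $\sigma$ mapping oriented edges to $\mathsf{O}(d)$ with $\sigma_{ji}=\sigma_{ij}^{\mathrm T}$. $(\mathcal{L}f)(i)=\sum_{j\sim i}w_{ij}(f(i)-\sigma_{ij}f(j))$. Let $(X_t)_{t\ge0}$ be the simple random walk on $G$ with transition probabilities $w_{ij}/\deg(i)$, and $\mathbb{E}^i$ the expectation given $X_0=i$. For $s\in\{0,1\}$ and $j\in V$, $T^s_j=\inf\{t\ge s: X_t=j\}$. The mean path signature is $\Omega^s_{ij}=\mathbb{E}^i\big[\prod_{\ell=1}^{T^s_j}\sigma_{X_{\ell-1}X_\ell}\big]$ (ordered product, empty product $=I_d$; so $\Omega^0_{ii}=I_d$). *)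

theory Defs
  imports "HOL-Analysis.Analysis"
begin

text \<open>Vertex set V = UNIV of a finite type 'v; weights w; edge {i,j} iff w i j > 0.
  Connection sigma :: 'v => 'v => real^'d^'d (a d x d real matrix on each oriented edge).\<close>

definition deg :: "('v::finite \<Rightarrow> 'v \<Rightarrow> real) \<Rightarrow> 'v \<Rightarrow> real" where
  "deg w i = (\<Sum>j\<in>UNIV. w i j)"

definition connection_graph ::
  "('v::finite \<Rightarrow> 'v \<Rightarrow> real) \<Rightarrow> ('v \<Rightarrow> 'v \<Rightarrow> real^'d^'d) \<Rightarrow> bool" where
  "connection_graph w \<sigma> \<longleftrightarrow>
     (\<forall>i j. w i j \<ge> 0) \<and> (\<forall>i j. w i j = w j i) \<and> (\<forall>i. w i i = 0) \<and>
     (\<forall>i j. (i, j) \<in> {(a, b). w a b > 0}\<^sup>*) \<and>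
     (\<forall>i j. w i j > 0 \<longrightarrow> orthogonal_matrix (\<sigma> i j) \<and> \<sigma> j i = transpose (\<sigma> i j))"

definition conn_laplacian ::
  "('v::finite \<Rightarrow> 'v \<Rightarrow> real) \<Rightarrow> ('v \<Rightarrow> 'v \<Rightarrow> real^'d^'d) \<Rightarrow> ('v \<Rightarrow> real^'d^'d) \<Rightarrow> 'v \<Rightarrow> real^'d^'d" where
  "conn_laplacian w \<sigma> f i = (\<Sum>j\<in>{j. w i j > 0}. w i j *\<^sub>R (f i - \<sigma> i j ** f j))"

text \<open>Probability that the simple random walk started at hd xs follows the path xs
  (for its first length xs - 1 steps): product of w_{ab}/deg(a) over consecutive pairs.\<close>
fun path_prob :: "('v::finite \<Rightarrow> 'v \<Rightarrow> real) \<Rightarrow> 'v list \<Rightarrow> real" where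
  "path_prob w (a # b # xs) = (w a b / deg w a) * path_prob w (b # xs)"
| "path_prob w _ = 1"

fun path_sig :: "('v \<Rightarrow> 'v \<Rightarrow> real^'d^'d) \<Rightarrow> 'v list \<Rightarrow> real^'d^'d" where
  "path_sig \<sigma> (a # b # xs) = \<sigma> a b ** path_sig \<sigma> (b # xs)"
| "path_sig \<sigma> _ = mat 1"

text \<open>Paths (X_0,...,X_T) of the walk started at i, stopped at T = T^s_j = inf{t >= s. X_t = j}:
  nonempty lists starting at i, ending at j, of length >= s+1, not visiting j at times
  s <= t < T.\<close>
definition hit_paths :: "nat \<Rightarrow> 'v \<Rightarrow> 'v \<Rightarrow> 'v list set" where
  "hit_paths s i j = {xs. xs \<noteq> [] \<and> hd xs = i \<and> last xs = j \<and> s + 1 \<le> length xs \<and>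
      (\<forall>t. s \<le> t \<and> t < length xs - 1 \<longrightarrow> xs ! t \<noteq> j)}"

text \<open>Mean path signature Omega^s_ij = E^i[prod_{l=1}^{T^s_j} sigma_{X_{l-1} X_l}],
  the expectation written as the sum over the (countably many) possible stopped paths.\<close>
definition mean_path_sig ::
  "('v::finite \<Rightarrow> 'v \<Rightarrow> real) \<Rightarrow> ('v \<Rightarrow> 'v \<Rightarrow> real^'d^'d) \<Rightarrow> nat \<Rightarrow> 'v \<Rightarrow> 'v \<Rightarrow> real^'d^'d" where
  "mean_path_sig w \<sigma> s i j = infsum (\<lambda>xs. path_prob w xs *\<^sub>R path_sig \<sigma> xs) (hit_paths s i j)"

end

theory Submission
  imports Defs
begin


lemma hit_self: "hit_paths 0 j j = {[j]}"
proof (rule set_eqI, rule iffI)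
  fix xs assume "xs \<in> hit_paths 0 j j"
  hence h: "xs \<noteq> []" "hd xs = j" "last xs = j" "\<forall>t. t < length xs - 1 \<longrightarrow> xs ! t \<noteq> j"
    by (auto simp: hit_paths_def)
  show "xs \<in> {[j]}"
  proof (cases "length xs - 1 > 0")
    case True then show ?thesis using h(4)[rule_format, of 0] h(1,2) by (simp add: hd_conv_nth)
  next
    case False then have "length xs = 1" using h(1) by (cases xs) auto
    then show ?thesis using h by (cases xs) auto
  qed
qed (auto simp: hit_paths_def)

lemma hit_decomp:
  assumes "i \<noteq> j"
  shows "hit_paths 0 i j = (\<Union>k. (Cons i) ` hit_paths 0 k j)"
proof (rule set_eqI, rule iffI)
  fix xs assume "xs \<in> hit_paths 0 i j"
  hence h: "xs \<noteq> []" "hd xs = i" "last xs = j" "\<forall>t. t < length xs - 1 \<longrightarrow> xs ! t \<noteq> j"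
    by (auto simp: hit_paths_def)
  then obtain ys where xs: "xs = i # ys" by (cases xs) auto
  have ys: "ys \<noteq> []" using h(3) xs assms by auto
  have "ys \<in> hit_paths 0 (hd ys) j"
    unfolding hit_paths_def
  proof (intro CollectI conjI allI impI)
    show "last ys = j" using h(3) xs ys by simp
    fix t assume "0 \<le> t \<and> t < length ys - 1"
    then show "ys ! t \<noteq> j" using h(4)[rule_format, of "Suc t"] xs by auto
  qed (use ys in \<open>auto simp: Suc_le_eq\<close>)
  then show "xs \<in> (\<Union>k. (Cons i) ` hit_paths 0 k j)" using xs by blast
next
  fix xs assume "xs \<in> (\<Union>k. (Cons i) ` hit_paths 0 k j)"
  then obtain k ys where xs: "xs = i # ys" and "ys \<in> hit_paths 0 k j" by blast
  hence h: "ys \<noteq> []" "hd ys = k" "last ys = j" "\<forall>t. t < length ys - 1 \<longrightarrow> ys ! t \<noteq> j"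
    by (auto simp: hit_paths_def)
  show "xs \<in> hit_paths 0 i j"
    unfolding hit_paths_def
  proof (intro CollectI conjI allI impI)
    fix t assume "0 \<le> t \<and> t < length xs - 1"
    then show "xs ! t \<noteq> j" using h xs assms by (cases t) auto
  qed (use xs h in auto)
qed

lemma hit_disj: "k \<noteq> k' \<Longrightarrow> (Cons i) ` hit_paths 0 k j \<inter> (Cons i) ` hit_paths 0 k' j = {}"
  by (auto simp: hit_paths_def)

lemma hit_hd: "ys \<in> hit_paths 0 k j \<Longrightarrow> ys \<noteq> [] \<and> hd ys = k"
  by (auto simp: hit_paths_def)

lemma path_prob_Cons: "ys \<noteq> [] \<Longrightarrow> path_prob w (i # ys) = w i (hd ys) / deg w i * path_prob w ys"
  by (cases ys) auto

lemma path_sig_Cons: "ys \<noteq> [] \<Longrightarrow> path_sig \<sigma> (i # ys) = \<sigma> i (hd ys) ** path_sig \<sigma> ys"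
  by (cases ys) auto

lemma deg_nonneg: "(\<forall>i j. w i j \<ge> 0) \<Longrightarrow> deg w i \<ge> 0"
  by (simp add: deg_def sum_nonneg)

lemma path_prob_nonneg: "(\<forall>i j. w i j \<ge> 0) \<Longrightarrow> path_prob w xs \<ge> 0"
  by (induction w xs rule: path_prob.induct) (auto intro!: mult_nonneg_nonneg divide_nonneg_nonneg deg_nonneg)

lemma path_sig_orth:
  assumes "\<forall>a b. w a b > 0 \<longrightarrow> orthogonal_matrix (\<sigma> a b)" "\<forall>i j. w i j \<ge> 0"
  shows "path_prob w xs \<noteq> 0 \<Longrightarrow> orthogonal_matrix (path_sig \<sigma> xs)"
proof (induction xs rule: induct_list012)
  case (3 a b zs)
  have "w a b / deg w a * path_prob w (b # zs) \<noteq> 0" using 3(3) by simp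
  hence "w a b \<noteq> 0" "path_prob w (b # zs) \<noteq> 0" by auto
  hence "w a b > 0" using assms(2) by (metis less_eq_real_def)
  then show ?case using 3(2)[OF \<open>path_prob w (b # zs) \<noteq> 0\<close>] assms(1)
    by (simp add: orthogonal_matrix_mul)
qed (auto simp: orthogonal_matrix_id)

lemma orth_norm_vec:
  fixes Q :: "real^'n^'n"
  assumes "orthogonal_matrix Q" shows "norm (Q *v x) = norm x"
proof -
  have "orthogonal_transformation ((*v) Q)"
    unfolding orthogonal_transformation_matrix using assms by (simp add: matrix_vector_mul_linear)
  then show ?thesis unfolding orthogonal_transformation by blast
qed

lemma orth_norm_le:
  fixes Q :: "real^'n^'n"
  assumes "orthogonal_matrix Q" shows "norm Q \<le> real CARD('n)"
proof -
  have row: "Q $ i = transpose Q *v axis i 1" for i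
    by (simp add: vec_eq_iff transpose_def matrix_vector_mult_def axis_def if_distrib cong: if_cong)
  have "norm (Q $ i) = 1" for i
    using orth_norm_vec[of "transpose Q" "axis i 1"] assms by (simp add: row)
  moreover have "norm Q \<le> (\<Sum>i\<in>UNIV. norm (Q $ i))"
    by (simp add: norm_vec_def L2_set_le_sum)
  ultimately show ?thesis by simp
qed



lemma finite_len: "finite {xs :: ('v::finite) list. P xs \<and> length xs \<le> n}"
  by (rule finite_subset[OF _ finite_lists_length_le[of "UNIV::'v set" n]]) auto

lemma sum_p_le: "(\<forall>i j. w i j \<ge> 0) \<Longrightarrow> (\<Sum>k\<in>UNIV. w i k / deg w i) \<le> 1"
  by (simp add: sum_divide_distrib[symmetric] deg_def[symmetric])

lemma sum_p_eq: "deg w i \<noteq> 0 \<Longrightarrow> (\<Sum>k\<in>UNIV. w i k / deg w i) = 1"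
  by (simp add: sum_divide_distrib[symmetric] deg_def[symmetric])

lemma partial_le:
  fixes w :: "'v::finite \<Rightarrow> 'v \<Rightarrow> real"
  assumes nn: "\<forall>i j. w i j \<ge> 0"
  shows "\<forall>i. sum (path_prob w) {xs \<in> hit_paths 0 i j. length xs \<le> n} \<le> 1"
proof (induction n)
  case 0
  have "{xs \<in> hit_paths 0 i j. length xs \<le> 0} = {}" for i by (auto simp: hit_paths_def)
  then show ?case by (simp only: sum.empty) simp
next
  case (Suc n)
  show ?case
  proof
    fix i
    show "sum (path_prob w) {xs \<in> hit_paths 0 i j. length xs \<le> Suc n} \<le> 1"
    proof (cases "i = j")
      case True
      have "{xs \<in> {[j]}. length xs \<le> Suc n} = {[j]}" by auto
      then show ?thesis using True by (simp add: hit_self)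
    next
      case False
      define B where "B k = {ys \<in> hit_paths 0 k j. length ys \<le> n}" for k
      have eq: "{xs \<in> hit_paths 0 i j. length xs \<le> Suc n} = (\<Union>k. (Cons i) ` B k)"
      proof (rule set_eqI, rule iffI)
        fix xs assume "xs \<in> {xs \<in> hit_paths 0 i j. length xs \<le> Suc n}"
        then obtain k ys where "xs = i # ys" "ys \<in> hit_paths 0 k j" "length xs \<le> Suc n"
          unfolding hit_decomp[OF False] by auto
        then show "xs \<in> (\<Union>k. (Cons i) ` B k)" unfolding B_def by auto
      next
        fix xs assume "xs \<in> (\<Union>k. (Cons i) ` B k)"
        then obtain k ys where "xs = i # ys" "ys \<in> hit_paths 0 k j" "length ys \<le> n"
          unfolding B_def by auto
        then show "xs \<in> {xs \<in> hit_paths 0 i j. length xs \<le> Suc n}"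
          unfolding hit_decomp[OF False] by auto
      qed
      have fin: "finite (B k)" for k unfolding B_def by (rule finite_len)
      have "sum (path_prob w) (\<Union>k. (Cons i) ` B k) = (\<Sum>k\<in>UNIV. sum (path_prob w) ((Cons i) ` B k))"
        by (rule sum.UNION_disjoint) (use fin in \<open>auto simp: B_def hit_paths_def\<close>)
      also have "\<dots> = (\<Sum>k\<in>UNIV. \<Sum>ys\<in>B k. path_prob w (i # ys))"
        by (simp add: sum.reindex)
      also have "\<dots> = (\<Sum>k\<in>UNIV. \<Sum>ys\<in>B k. w i k / deg w i * path_prob w ys)"
        by (intro sum.cong refl) (auto simp: B_def path_prob_Cons dest: hit_hd)
      also have "\<dots> = (\<Sum>k\<in>UNIV. w i k / deg w i * sum (path_prob w) (B k))"
        by (simp add: sum_distrib_left)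
      also have "\<dots> \<le> (\<Sum>k\<in>UNIV. w i k / deg w i * 1)"
        using Suc.IH nn by (intro sum_mono mult_left_mono) (auto simp: B_def intro: divide_nonneg_nonneg deg_nonneg)
      also have "\<dots> \<le> 1" using sum_p_le[OF nn] by simp
      finally show ?thesis using eq by simp
    qed
  qed
qed

lemma prob_summable:
  fixes w :: "'v::finite \<Rightarrow> 'v \<Rightarrow> real"
  assumes nn: "\<forall>i j. w i j \<ge> 0"
  shows "path_prob w summable_on hit_paths 0 i j"
proof (rule nonneg_bdd_above_summable_on)
  show "\<And>x. x \<in> hit_paths 0 i j \<Longrightarrow> 0 \<le> path_prob w x" using path_prob_nonneg[OF nn] by blast
  show "bdd_above (sum (path_prob w) ` {F. F \<subseteq> hit_paths 0 i j \<and> finite F})"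
  proof (rule bdd_aboveI2)
    fix F assume F: "F \<in> {F. F \<subseteq> hit_paths 0 i j \<and> finite F}"
    define n where "n = Max (length ` F)"
    have "F \<subseteq> {xs \<in> hit_paths 0 i j. length xs \<le> n}"
      using F by (auto simp: n_def)
    hence "sum (path_prob w) F \<le> sum (path_prob w) {xs \<in> hit_paths 0 i j. length xs \<le> n}"
      by (intro sum_mono2 finite_len) (use path_prob_nonneg[OF nn] in auto)
    also have "\<dots> \<le> 1" using partial_le[OF nn] by blast
    finally show "sum (path_prob w) F \<le> 1" .
  qed
qed

lemma term_summable:
  fixes w :: "'v::finite \<Rightarrow> 'v \<Rightarrow> real" and \<sigma> :: "'v \<Rightarrow> 'v \<Rightarrow> real^'d^'d"
  assumes nn: "\<forall>i j. w i j \<ge> 0" and orth: "\<forall>a b. w a b > 0 \<longrightarrow> orthogonal_matrix (\<sigma> a b)"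
  shows "(\<lambda>xs. path_prob w xs *\<^sub>R path_sig \<sigma> xs) summable_on hit_paths 0 i j"
proof -
  have "(\<lambda>xs. norm (path_prob w xs *\<^sub>R path_sig \<sigma> xs)) summable_on hit_paths 0 i j"
  proof (rule Infinite_Sum.abs_summable_on_comparison_test)
  show "(\<lambda>xs. norm (real CARD('d) * path_prob w xs)) summable_on hit_paths 0 i j"
    using prob_summable[OF nn] path_prob_nonneg[OF nn]
    by (auto intro!: summable_on_cmult_right simp: abs_mult)
  fix xs
  show "norm (path_prob w xs *\<^sub>R path_sig \<sigma> xs) \<le> norm (real CARD('d) * path_prob w xs)"
  proof (cases "path_prob w xs = 0")
    case False
    have "norm (path_sig \<sigma> xs) \<le> real CARD('d)"
      by (rule orth_norm_le, rule path_sig_orth[OF orth nn False])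
    then show ?thesis using path_prob_nonneg[OF nn, of xs]
      by (simp add: abs_mult mult.commute mult_left_mono)
  qed simp
  qed
  then show ?thesis by (rule abs_summable_summable)
qed



lemma bl_left: "bounded_linear (\<lambda>X::real^'n^'m. (A::real^'m^'k) ** X)"
  unfolding linear_conv_bounded_linear[symmetric]
  by (rule linearI) (simp_all add: matrix_add_ldistrib matrix_scalar_ac scalar_matrix_assoc)

lemma matrix_add_rdist: "((A::real^'m^'k) + B) ** (C::real^'n^'m) = A ** C + B ** C"
  by (vector matrix_matrix_mult_def sum.distrib[symmetric] field_simps)

lemma bl_right: "bounded_linear (\<lambda>X::real^'m^'k. X ** (B::real^'n^'m))"
  unfolding linear_conv_bounded_linear[symmetric]
  by (rule linearI) (simp_all add: matrix_add_rdist scalar_matrix_assoc)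

lemma sum_mult_right: "(\<Sum>l\<in>S. (F l :: real^'m^'k)) ** (B::real^'n^'m) = (\<Sum>l\<in>S. F l ** B)"
  using linear_sum[OF bounded_linear.linear[OF bl_right[of B]]] by simp

lemma mat_scaleR_right: "(A::real^'m^'k) ** (c *\<^sub>R (B::real^'n^'m)) = c *\<^sub>R (A ** B)"
  by (metis matrix_scalar_ac scalar_matrix_assoc)

lemma omega_decomp:
  fixes w :: "'v::finite \<Rightarrow> 'v \<Rightarrow> real" and \<sigma> :: "'v \<Rightarrow> 'v \<Rightarrow> real^'d^'d"
  assumes nn: "\<forall>i j. w i j \<ge> 0" and orth: "\<forall>a b. w a b > 0 \<longrightarrow> orthogonal_matrix (\<sigma> a b)"
    and ij: "i \<noteq> j"
  shows "mean_path_sig w \<sigma> 0 i j = (\<Sum>k\<in>UNIV. (w i k / deg w i) *\<^sub>R (\<sigma> i k ** mean_path_sig w \<sigma> 0 k j))"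
proof -
  define T where "T xs = path_prob w xs *\<^sub>R path_sig \<sigma> xs" for xs
  define \<Omega> where "\<Omega> k = mean_path_sig w \<sigma> 0 k j" for k
  have hs: "(T has_sum \<Omega> k) (hit_paths 0 k j)" for k
    unfolding T_def \<Omega>_def mean_path_sig_def by (rule has_sum_infsum[OF term_summable[OF nn orth]])
  have hs2: "(T has_sum (w i k / deg w i) *\<^sub>R (\<sigma> i k ** \<Omega> k)) ((Cons i) ` hit_paths 0 k j)" for k
  proof -
    have bl: "bounded_linear (\<lambda>X. (w i k / deg w i) *\<^sub>R (\<sigma> i k ** X))"
      by (intro bounded_linear_compose[OF bounded_linear_scaleR_right bl_left])
    have "((\<lambda>ys. (w i k / deg w i) *\<^sub>R (\<sigma> i k ** T ys)) has_sum (w i k / deg w i) *\<^sub>R (\<sigma> i k ** \<Omega> k)) (hit_paths 0 k j)"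
      by (rule has_sum_bounded_linear[OF bl hs])
    then have ts: "((T \<circ> Cons i) has_sum (w i k / deg w i) *\<^sub>R (\<sigma> i k ** \<Omega> k)) (hit_paths 0 k j)"
    proof (rule has_sum_cong[THEN iffD1, rotated])
      fix ys assume "ys \<in> hit_paths 0 k j"
      then have "ys \<noteq> [] \<and> hd ys = k" by (rule hit_hd)
      then have "ys \<noteq> []" "hd ys = k" by simp_all
      then show "(w i k / deg w i) *\<^sub>R (\<sigma> i k ** T ys) = (T \<circ> Cons i) ys"
        by (simp only: T_def o_apply path_prob_Cons[OF \<open>ys \<noteq> []\<close>] path_sig_Cons[OF \<open>ys \<noteq> []\<close>] \<open>hd ys = k\<close> mat_scaleR_right scaleR_scaleR)
    qed
    have inj: "inj_on (Cons i) (hit_paths 0 k j)" by (simp add: inj_on_def)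
    show ?thesis unfolding has_sum_reindex[OF inj] by (rule ts)
  qed
  have "(T has_sum (\<Sum>k\<in>UNIV. (w i k / deg w i) *\<^sub>R (\<sigma> i k ** \<Omega> k))) (\<Union>k\<in>UNIV. (Cons i) ` hit_paths 0 k j)"
  proof (rule sum_has_sum)
    show "finite (UNIV :: 'v set)" by simp
    show "\<And>a. a \<in> UNIV \<Longrightarrow> (T has_sum (w i a / deg w i) *\<^sub>R (\<sigma> i a ** \<Omega> a)) ((Cons i) ` hit_paths 0 a j)"
      by (rule hs2)
    show "\<And>a a'. a \<in> UNIV \<Longrightarrow> a' \<in> UNIV \<Longrightarrow> a \<noteq> a' \<Longrightarrow> (Cons i) ` hit_paths 0 a j \<inter> (Cons i) ` hit_paths 0 a' j = {}"
      by (rule hit_disj)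
  qed
  then have "(T has_sum (\<Sum>k\<in>UNIV. (w i k / deg w i) *\<^sub>R (\<sigma> i k ** \<Omega> k))) (hit_paths 0 i j)"
    unfolding hit_decomp[OF ij] .
  then show ?thesis unfolding \<Omega>_def mean_path_sig_def T_def by (rule infsumI)
qed



lemma bl_mv: "bounded_linear (\<lambda>X::real^'n^'m. X *v v)"
  unfolding linear_conv_bounded_linear[symmetric]
  by (rule linearI) (simp_all add: matrix_vector_mult_add_rdistrib scaleR_matrix_vector_assoc)

lemma sum_mv: "(\<Sum>l\<in>S. (F l :: real^'n^'m)) *v v = (\<Sum>l\<in>S. F l *v v)"
  using linear_sum[OF bounded_linear.linear[OF bl_mv[of v]]] by simp

lemma omega_self: "mean_path_sig w \<sigma> 0 j j = mat 1"
  by (simp add: mean_path_sig_def hit_self)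

lemma harmonic:
  fixes w :: "'v::finite \<Rightarrow> 'v \<Rightarrow> real" and \<sigma> :: "'v \<Rightarrow> 'v \<Rightarrow> real^'d^'d"
  assumes nn: "\<forall>i j. w i j \<ge> 0" and L: "conn_laplacian w \<sigma> f k = 0" and d: "deg w k \<noteq> 0"
  shows "f k = (\<Sum>l\<in>UNIV. (w k l / deg w k) *\<^sub>R (\<sigma> k l ** f l))"
proof -
  have "(\<Sum>l\<in>UNIV. w k l *\<^sub>R (f k - \<sigma> k l ** f l)) = (\<Sum>l\<in>{l. w k l > 0}. w k l *\<^sub>R (f k - \<sigma> k l ** f l))"
  proof (rule sum.mono_neutral_right)
    show "\<forall>i\<in>UNIV - {l. 0 < w k l}. w k i *\<^sub>R (f k - \<sigma> k i ** f i) = 0"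
      using nn by (auto simp: not_less intro: antisym)
  qed auto
  also have "\<dots> = 0" using L by (simp add: conn_laplacian_def)
  finally have "(\<Sum>l\<in>UNIV. w k l *\<^sub>R f k) - (\<Sum>l\<in>UNIV. w k l *\<^sub>R (\<sigma> k l ** f l)) = 0"
    by (simp add: scaleR_right_diff_distrib sum_subtractf)
  hence "deg w k *\<^sub>R f k = (\<Sum>l\<in>UNIV. w k l *\<^sub>R (\<sigma> k l ** f l))"
    by (simp add: deg_def scaleR_sum_left)
  hence "(1 / deg w k) *\<^sub>R (deg w k *\<^sub>R f k) = (1 / deg w k) *\<^sub>R (\<Sum>l\<in>UNIV. w k l *\<^sub>R (\<sigma> k l ** f l))"
    by simp
  then show ?thesis using d by (simp add: scaleR_sum_right)
qed



lemma mat_diff_left: "(A::real^'m^'k) ** (B - (C::real^'n^'m)) = A ** B - A ** C"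
  by (rule linear_diff[OF bounded_linear.linear[OF bl_left]])

theorem proposition4p7:
  fixes w :: "'v::finite \<Rightarrow> 'v \<Rightarrow> real"
    and \<sigma> :: "'v \<Rightarrow> 'v \<Rightarrow> real^'d^'d"
    and f :: "'v \<Rightarrow> real^'d^'d"
  assumes "connection_graph w \<sigma>"
    and "\<forall>x. conn_laplacian w \<sigma> f x = 0"
  shows "\<forall>i j. f i = mean_path_sig w \<sigma> 0 i j ** f j"
proof (intro allI)
  fix i j
  have cg: "(\<forall>i j. w i j \<ge> 0) \<and> (\<forall>i j. w i j = w j i) \<and> (\<forall>i. w i i = 0) \<and>
     (\<forall>i j. (i, j) \<in> {(a, b). w a b > 0}\<^sup>*) \<and>
     (\<forall>i j. w i j > 0 \<longrightarrow> orthogonal_matrix (\<sigma> i j) \<and> \<sigma> j i = transpose (\<sigma> i j))"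
    using assms(1) unfolding connection_graph_def .
  have nn: "\<forall>i j. w i j \<ge> 0" using cg by (elim conjE)
  have rt: "\<forall>i j. (i, j) \<in> {(a, b). w a b > 0}\<^sup>*" using cg by (elim conjE)
  have orth: "\<forall>a b. w a b > 0 \<longrightarrow> orthogonal_matrix (\<sigma> a b)"
  proof (intro allI impI)
    fix a b assume "w a b > 0"
    then show "orthogonal_matrix (\<sigma> a b)" using cg by (elim conjE) (drule spec, drule spec, drule mp, assumption, erule conjunct1)
  qed
  define \<Omega> where "\<Omega> k = mean_path_sig w \<sigma> 0 k j" for k
  define h where "h k = f k - \<Omega> k ** f j" for k
  define p where "p k l = w k l / deg w k" for k l
  have hj: "h j = 0" unfolding h_def \<Omega>_def omega_self by simp
  have degpos: "deg w k \<noteq> 0" if kj: "k \<noteq> j" for k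
  proof -
    have rkj: "(k, j) \<in> {(a, b). w a b > 0}\<^sup>*" using rt by (elim allE)
    obtain z where z: "w k z > 0"
    proof (rule converse_rtranclE[OF rkj])
      show "k = j \<Longrightarrow> thesis" using kj by (elim notE)
      fix y assume "(k, y) \<in> {(a, b). w a b > 0}"
      then have "w k y > 0" by simp
      then show thesis by (rule that)
    qed
    have "w k z \<le> deg w k" unfolding deg_def
      by (rule member_le_sum) (use nn in simp_all)
    then show ?thesis using z by linarith
  qed
  have p_nn: "p k l \<ge> 0" for k l unfolding p_def
    by (rule divide_nonneg_nonneg) (use nn deg_nonneg[OF nn] in simp_all)
  have p_sum: "(\<Sum>l\<in>UNIV. p k l) = 1" if "k \<noteq> j" for k
    unfolding p_def using sum_p_eq[OF degpos[OF that]] .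
  have hrec: "h k = (\<Sum>l\<in>UNIV. p k l *\<^sub>R (\<sigma> k l ** h l))" if "k \<noteq> j" for k
  proof -
    have "h k = (\<Sum>l\<in>UNIV. p k l *\<^sub>R (\<sigma> k l ** f l)) - (\<Sum>l\<in>UNIV. p k l *\<^sub>R (\<sigma> k l ** \<Omega> l)) ** f j"
    proof -
      have e1: "f k = (\<Sum>l\<in>UNIV. p k l *\<^sub>R (\<sigma> k l ** f l))"
        unfolding p_def by (rule harmonic[OF nn assms(2)[rule_format] degpos[OF that]])
      have e2: "\<Omega> k = (\<Sum>l\<in>UNIV. p k l *\<^sub>R (\<sigma> k l ** \<Omega> l))"
        unfolding p_def \<Omega>_def by (rule omega_decomp[OF nn orth that])
      show ?thesis unfolding h_def by (subst e1, subst e2, rule refl)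
    qed
    also have "\<dots> = (\<Sum>l\<in>UNIV. p k l *\<^sub>R (\<sigma> k l ** f l)) - (\<Sum>l\<in>UNIV. p k l *\<^sub>R (\<sigma> k l ** (\<Omega> l ** f j)))"
      by (simp only: sum_mult_right scalar_matrix_assoc[symmetric] matrix_mul_assoc[symmetric])
    also have "\<dots> = (\<Sum>l\<in>UNIV. p k l *\<^sub>R (\<sigma> k l ** f l - \<sigma> k l ** (\<Omega> l ** f j)))"
      by (simp add: sum_subtractf scaleR_right_diff_distrib)
    also have "\<dots> = (\<Sum>l\<in>UNIV. p k l *\<^sub>R (\<sigma> k l ** h l))"
      unfolding h_def by (simp only: mat_diff_left)
    finally show ?thesis .
  qed
  have "h k *v v = 0" for k v
  proof -
    define u where "u k = h k *v v" for k
    have uj: "u j = 0" by (simp add: u_def hj)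
    have ub: "norm (u k) \<le> (\<Sum>l\<in>UNIV. p k l * norm (u l))" if "k \<noteq> j" for k
    proof -
      have uk: "u k = (\<Sum>l\<in>UNIV. p k l *\<^sub>R (\<sigma> k l *v u l))"
        unfolding u_def hrec[OF that] sum_mv
        by (simp add: scaleR_matrix_vector_assoc[symmetric] matrix_vector_mul_assoc)
      have "norm (u k) \<le> (\<Sum>l\<in>UNIV. norm (p k l *\<^sub>R (\<sigma> k l *v u l)))"
        unfolding uk by (rule norm_sum)
      also have "\<dots> = (\<Sum>l\<in>UNIV. p k l * norm (u l))"
      proof (rule sum.cong[OF refl])
        fix l
        show "norm (p k l *\<^sub>R (\<sigma> k l *v u l)) = p k l * norm (u l)"
        proof (cases "w k l > 0")
          case True
          then show ?thesis using orth_norm_vec[of "\<sigma> k l" "u l"] orth p_nn[of k l] by simp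
        next
          case False
          then have "w k l = 0" using nn by (meson antisym not_less)
          then show ?thesis by (simp add: p_def)
        qed
      qed
      finally show ?thesis .
    qed
    define M where "M = Max (range (\<lambda>k. norm (u k)))"
    have Mge: "norm (u k) \<le> M" for k unfolding M_def by (intro Max_ge) auto
    have "M \<in> range (\<lambda>k. norm (u k))" unfolding M_def by (rule Max_in) auto
    then obtain i0 where i0': "M = norm (u i0)" by blast
    have i0: "norm (u i0) = M" using i0' by simp
    have closed: "norm (u z) = M" if y: "norm (u y) = M" "y \<noteq> j" "w y z > 0" for y z
    proof -
      have "M \<le> (\<Sum>l\<in>UNIV. p y l * norm (u l))" using ub[OF y(2)] y(1) by simp
      have "(\<Sum>l\<in>UNIV. p y l * (M - norm (u l))) = (\<Sum>l\<in>UNIV. p y l) * M - (\<Sum>l\<in>UNIV. p y l * norm (u l))"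
        by (simp only: right_diff_distrib sum_subtractf sum_distrib_right)
      hence "(\<Sum>l\<in>UNIV. p y l * (M - norm (u l))) \<le> 0"
        using p_sum[OF y(2)] \<open>M \<le> (\<Sum>l\<in>UNIV. p y l * norm (u l))\<close> by simp
      moreover have nn2: "\<forall>l\<in>UNIV. p y l * (M - norm (u l)) \<ge> 0"
        using p_nn Mge by (simp add: mult_nonneg_nonneg)
      ultimately have "(\<Sum>l\<in>UNIV. p y l * (M - norm (u l))) = 0" by (meson antisym sum_nonneg)
      hence "\<forall>l. p y l * (M - norm (u l)) = 0"
        using sum_nonneg_eq_0_iff[of UNIV "\<lambda>l. p y l * (M - norm (u l))"] nn2 by simp
      hence "p y z * (M - norm (u z)) = 0" by blast
      moreover have "p y z > 0" unfolding p_def using y(3) degpos[OF y(2)] deg_nonneg[OF nn, of y]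
        by simp
      ultimately show ?thesis by simp
    qed
    have "M = 0"
    proof (rule ccontr)
      assume "M \<noteq> 0"
      have "(i0, j) \<in> {(a, b). w a b > 0}\<^sup>*" using rt by blast
      then have "norm (u j) = M"
      proof (induction rule: rtrancl_induct)
        case base then show ?case by (rule i0)
      next
        case (step y z)
        have "y \<noteq> j" using step.IH uj \<open>M \<noteq> 0\<close> by auto
        then show ?case using closed[OF step.IH] step.hyps(2) by auto
      qed
      then show False using uj \<open>M \<noteq> 0\<close> by simp
    qed
    then show ?thesis using Mge[of k] unfolding u_def by simp
  qed
  then have "h i = 0" using matrix_eq[of "h i" 0] by simp
  then show "f i = mean_path_sig w \<sigma> 0 i j ** f j" by (simp add: h_def \<Omega>_def)
qed

end
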